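(* Let $n \ge 2$ and $L$ be integers with $2 \le L \le n+1$. On the grid $\{1,\dots,n\}^2$ consider the following subsets: the lines $L_i = \{(i,k) : 1 \le k \le n\}$ for $1 \le i \le n$; the columns $C_j = \{(k,j) : 1 \le k \le n\}$ for $1 \le j \le n$; and, for each slope $a \in \{1,\dots,L-2\}$ and each $b \in \{1,\dots,n\}$, the diagonal $D^a_b = \{(k, r_n(ak+b)) : 1 \le k \le n\}$, where $r_n(m)$ denotes the unique element of $\{1,\dots,n\}$ congruent to $m$ modulo $n$. Then the family $\{L_k, C_k, D^a_k : 1 \le k \le n,\ 1 \le a \le L-2\}$ is an $N(n^2,n,L)$ multipool if and only if $L-2$ is smaller than the smallest prime divisor of $n$.
   Context: A family of subsets (pools) of a set of $n^2$ items is called an $N(n^2,n,L)$ multipool if: (1) each pool contains exactly $n$ items; (2) each item belongs to exactly $L$ pools; (3) any two distinct items belong to at most one common pool. *)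

theory Defs
  imports "HOL-Computational_Algebra.Primes"
begin

definition multipool :: "nat \<Rightarrow> nat \<Rightarrow> nat \<Rightarrow> 'a set \<Rightarrow> 'i set \<Rightarrow> ('i \<Rightarrow> 'a set) \<Rightarrow> bool" where
  "multipool m n L X I P \<longleftrightarrow>
     finite X \<and> card X = m \<and> finite I \<and>
     (\<forall>i\<in>I. P i \<subseteq> X \<and> card (P i) = n) \<and>
     (\<forall>x\<in>X. card {i\<in>I. x \<in> P i} = L) \<and>
     (\<forall>x\<in>X. \<forall>y\<in>X. x \<noteq> y \<longrightarrow> card {i\<in>I. x \<in> P i \<and> y \<in> P i} \<le> 1)"

definition rn :: "nat \<Rightarrow> int \<Rightarrow> nat" where
  "rn n m = nat (((m - 1) mod int n) + 1)"

datatype pool_idx = Line nat | Col nat | Diag nat nat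

definition grid :: "nat \<Rightarrow> (nat \<times> nat) set" where
  "grid n = {1..n} \<times> {1..n}"

definition grid_pool :: "nat \<Rightarrow> pool_idx \<Rightarrow> (nat \<times> nat) set" where
  "grid_pool n p = (case p of
       Line i \<Rightarrow> {(i, k) | k. 1 \<le> k \<and> k \<le> n}
     | Col j \<Rightarrow> {(k, j) | k. 1 \<le> k \<and> k \<le> n}
     | Diag a b \<Rightarrow> {(k, rn n (int a * int k + int b)) | k. 1 \<le> k \<and> k \<le> n})"

definition grid_index :: "nat \<Rightarrow> nat \<Rightarrow> pool_idx set" where
  "grid_index n L = Line ` {1..n} \<union> Col ` {1..n} \<union>
     {Diag a b | a b. 1 \<le> a \<and> a \<le> L - 2 \<and> 1 \<le> b \<and> b \<le> n}"

definition smallest_prime_divisor :: "nat \<Rightarrow> nat" where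
  "smallest_prime_divisor n = Min {p. prime p \<and> p dvd n}"

end

theory Submission
  imports Defs
begin

lemma rn_mod:
  assumes "n > 0" shows "int (rn n m) mod int n = m mod int n"
proof -
  have "(m - 1) mod int n + 1 \<ge> 1" using assms by simp
  then have "int (rn n m) = (m - 1) mod int n + 1" unfolding rn_def by simp
  then show ?thesis by (simp add: mod_add_left_eq)
qed

lemma rn_range:
  assumes "n > 0" shows "1 \<le> rn n m \<and> rn n m \<le> n"
proof -
  have "0 \<le> (m - 1) mod int n" "(m - 1) mod int n < int n" using assms by auto
  then show ?thesis unfolding rn_def by linarith
qed

lemma rn_eq_iff:
  assumes "n > 0"
  shows "rn n m = y \<longleftrightarrow> (1 \<le> y \<and> y \<le> n \<and> m mod int n = int y mod int n)"
proof
  assume "rn n m = y"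
  then show "1 \<le> y \<and> y \<le> n \<and> m mod int n = int y mod int n"
    using rn_range[OF assms] rn_mod[OF assms, of m] by auto
next
  assume h: "1 \<le> y \<and> y \<le> n \<and> m mod int n = int y mod int n"
  have "(m - 1) mod int n = (int y - 1) mod int n"
    using h by (metis mod_diff_left_eq)
  also have "\<dots> = int y - 1" using h by (simp add: mod_pos_pos_trivial)
  finally show "rn n m = y" unfolding rn_def using h by simp
qed

lemma mem_Line: "(x, y) \<in> grid_pool n (Line i) \<longleftrightarrow> x = i \<and> 1 \<le> y \<and> y \<le> n"
  by (auto simp: grid_pool_def)

lemma mem_Col: "(x, y) \<in> grid_pool n (Col j) \<longleftrightarrow> y = j \<and> 1 \<le> x \<and> x \<le> n"
  by (auto simp: grid_pool_def)

lemma mem_Diag: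
  assumes "n > 0"
  shows "(x, y) \<in> grid_pool n (Diag a b) \<longleftrightarrow> 1 \<le> x \<and> x \<le> n \<and> 1 \<le> y \<and> y \<le> n \<and>
     (int a * int x + int b) mod int n = int y mod int n"
  using rn_eq_iff[OF assms] by (auto simp: grid_pool_def) (metis rn_eq_iff[OF assms])

lemma mem_index:
  "Line i \<in> grid_index n L \<longleftrightarrow> 1 \<le> i \<and> i \<le> n"
  "Col i \<in> grid_index n L \<longleftrightarrow> 1 \<le> i \<and> i \<le> n"
  "Diag a b \<in> grid_index n L \<longleftrightarrow> 1 \<le> a \<and> a \<le> L - 2 \<and> 1 \<le> b \<and> b \<le> n"
  by (auto simp: grid_index_def)

lemma spd_le:
  assumes "n \<ge> 2" "prime p" "p dvd n" shows "smallest_prime_divisor n \<le> p"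
proof -
  have "finite {p. prime p \<and> p dvd n}"
    by (rule finite_subset[of _ "{..n}"]) (use assms in \<open>auto dest: dvd_imp_le\<close>)
  then show ?thesis unfolding smallest_prime_divisor_def using assms by (auto intro: Min_le)
qed

lemma spd_prime:
  assumes "n \<ge> 2" shows "prime (smallest_prime_divisor n) \<and> smallest_prime_divisor n dvd n"
proof -
  have fin: "finite {p. prime p \<and> p dvd n}"
    by (rule finite_subset[of _ "{..n}"]) (use assms in \<open>auto dest: dvd_imp_le\<close>)
  obtain p where "prime p" "p dvd n" using prime_factor_nat[of n] assms by auto
  then have "{p. prime p \<and> p dvd n} \<noteq> {}" by auto
  from Min_in[OF fin this] show ?thesis unfolding smallest_prime_divisor_def by auto
qed

lemma coprime_small:
  assumes "n \<ge> 2" "L - 2 < smallest_prime_divisor n" "1 \<le> c" "c \<le> L - 2"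
  shows "coprime c n"
proof (rule ccontr)
  assume "\<not> coprime c n"
  then have "gcd c n \<noteq> 1" by (simp add: coprime_iff_gcd_eq_1)
  then obtain p where p: "prime p" "p dvd gcd c n" using prime_factor_nat by blast
  then have "p dvd c" "p dvd n" by auto
  then have "p \<le> c" using assms(3) by (auto dest: dvd_imp_le)
  moreover have "smallest_prime_divisor n \<le> p" using spd_le[OF assms(1) p(1) \<open>p dvd n\<close>] .
  ultimately show False using assms by linarith
qed

lemma cancel_int:
  assumes "coprime c n" "int n dvd int c * d" shows "int n dvd d"
proof -
  have "coprime (int n) (int c)" using assms(1) by (simp add: coprime_commute)
  then show ?thesis using assms(2) by (simp add: coprime_dvd_mult_right_iff)
qed

lemma small_diff:
  assumes "1 \<le> x1" "x1 \<le> n" "1 \<le> x2" "x2 \<le> n" "int n dvd (int x1 - int x2)"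
  shows "x1 = x2"
proof (rule ccontr)
  assume "x1 \<noteq> x2"
  then have "int x1 - int x2 \<noteq> 0" by simp
  from dvd_imp_le_int[OF this assms(5)] assms show False by linarith
qed


lemma pool_props:
  assumes "n \<ge> 2" "i \<in> grid_index n L"
  shows "grid_pool n i \<subseteq> grid n \<and> card (grid_pool n i) = n"
proof (cases i)
  case (Line k)
  have "grid_pool n i = (\<lambda>t. (k, t)) ` {1..n}" using Line by (auto simp: grid_pool_def)
  moreover have "card ((\<lambda>t. (k, t)) ` {1..n}) = n" by (subst card_image) (auto simp: inj_on_def)
  ultimately show ?thesis using assms Line by (auto simp: grid_def mem_index)
next
  case (Col k)
  have "grid_pool n i = (\<lambda>t. (t, k)) ` {1..n}" using Col by (auto simp: grid_pool_def)
  moreover have "card ((\<lambda>t. (t, k)) ` {1..n}) = n" by (subst card_image) (auto simp: inj_on_def)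
  ultimately show ?thesis using assms Col by (auto simp: grid_def mem_index)
next
  case (Diag a b)
  have "grid_pool n i = (\<lambda>t. (t, rn n (int a * int t + int b))) ` {1..n}"
    using Diag by (auto simp: grid_pool_def)
  moreover have "card ((\<lambda>t. (t, rn n (int a * int t + int b))) ` {1..n}) = n"
    by (subst card_image) (auto simp: inj_on_def)
  moreover have "\<And>t. 1 \<le> rn n t \<and> rn n t \<le> n" using rn_range assms(1) by simp
  ultimately show ?thesis by (auto simp: grid_def)
qed

lemma count_L:
  assumes "n \<ge> 2" "L \<ge> 2" "1 \<le> x" "x \<le> n" "1 \<le> y" "y \<le> n"
  shows "card {i \<in> grid_index n L. (x, y) \<in> grid_pool n i} = L"
proof -
  have n0: "n > 0" using assms by simp
  define f where "f a = Diag a (rn n (int y - int a * int x))" for a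
  have eq: "{i \<in> grid_index n L. (x, y) \<in> grid_pool n i} = {Line x, Col y} \<union> f ` {1..L-2}"
  proof (rule set_eqI)
    fix i
    show "i \<in> {i \<in> grid_index n L. (x, y) \<in> grid_pool n i} \<longleftrightarrow> i \<in> {Line x, Col y} \<union> f ` {1..L-2}"
    proof (cases i)
      case (Line k) then show ?thesis using assms by (auto simp: mem_Line mem_index f_def)
    next
      case (Col k) then show ?thesis using assms by (auto simp: mem_Col mem_index f_def)
    next
      case (Diag a b)
      show ?thesis
      proof
        assume "i \<in> {i \<in> grid_index n L. (x, y) \<in> grid_pool n i}"
        then have h: "1 \<le> a" "a \<le> L - 2" "1 \<le> b" "b \<le> n"
          "(int a * int x + int b) mod int n = int y mod int n"
          using Diag mem_Diag[OF n0] by (auto simp: mem_index)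
        then have "int n dvd (int a * int x + int b) - int y" by (simp add: mod_eq_dvd_iff)
        moreover have "(int y - int a * int x) - int b = - ((int a * int x + int b) - int y)" by simp
        ultimately have "int n dvd (int y - int a * int x) - int b"
          by (metis dvd_minus_iff)
        then have "(int y - int a * int x) mod int n = int b mod int n" by (simp add: mod_eq_dvd_iff)
        then have "b = rn n (int y - int a * int x)" using rn_eq_iff[OF n0, of "int y - int a * int x" b] h by auto
        then show "i \<in> {Line x, Col y} \<union> f ` {1..L-2}" using Diag h by (auto simp: f_def)
      next
        assume "i \<in> {Line x, Col y} \<union> f ` {1..L-2}"
        then obtain a' where a': "a' \<in> {1..L-2}" "i = f a'" using Diag by auto
        let ?b = "rn n (int y - int a' * int x)"
        have r: "1 \<le> ?b" "?b \<le> n" using rn_range[OF n0] by auto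
        have "(int a' * int x + int ?b) mod int n = (int a' * int x + (int y - int a' * int x)) mod int n"
          using rn_mod[OF n0] by (metis mod_add_right_eq)
        then have "(int a' * int x + int ?b) mod int n = int y mod int n" by simp
        then show "i \<in> {i \<in> grid_index n L. (x, y) \<in> grid_pool n i}"
          using a' r assms mem_Diag[OF n0] by (auto simp: f_def mem_index)
      qed
    qed
  qed
  have inj: "inj_on f {1..L-2}" by (auto simp: inj_on_def f_def)
  have disj: "{Line x, Col y} \<inter> f ` {1..L-2} = {}" by (auto simp: f_def)
  have "card ({Line x, Col y} \<union> f ` {1..L-2}) = 2 + (L - 2)"
    using card_Un_disjoint[OF _ _ disj] card_image[OF inj] by simp
  then show ?thesis using eq assms by simp
qed


lemma slope_cancel:
  assumes "n \<ge> 2" "L - 2 < smallest_prime_divisor n" "a \<le> L - 2" "a' \<le> L - 2" "a \<noteq> a'"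
    "int n dvd (int a - int a') * d"
  shows "int n dvd d"
proof (cases "a' < a")
  case True
  then have c: "int (a - a') = int a - int a'" by simp
  have "coprime (a - a') n" using coprime_small[OF assms(1,2), of "a - a'"] True assms by simp
  then show ?thesis using cancel_int assms(6) c by metis
next
  case False
  then have lt: "a < a'" using assms by simp
  then have c: "int (a' - a) = int a' - int a" by simp
  have "coprime (a' - a) n" using coprime_small[OF assms(1,2), of "a' - a"] lt assms by simp
  moreover have "int n dvd int (a' - a) * d"
  proof -
    have "int (a' - a) * d = - ((int a - int a') * d)" using c by (simp add: algebra_simps)
    then show ?thesis using assms(6) by (metis dvd_minus_iff)
  qed
  ultimately show ?thesis using cancel_int by blast
qed

lemma modeq_dvd: "(p::int) mod m = q mod m \<Longrightarrow> m dvd p - q"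
  by (simp add: mod_eq_dvd_iff)

lemma pair_unique:
  assumes n2: "n \<ge> 2" and spd: "L - 2 < smallest_prime_divisor n"
    and g: "1 \<le> x1" "x1 \<le> n" "1 \<le> y1" "y1 \<le> n" "1 \<le> x2" "x2 \<le> n" "1 \<le> y2" "y2 \<le> n"
    and ne: "(x1, y1) \<noteq> (x2, y2)"
    and i: "i \<in> grid_index n L" "(x1, y1) \<in> grid_pool n i" "(x2, y2) \<in> grid_pool n i"
    and j: "j \<in> grid_index n L" "(x1, y1) \<in> grid_pool n j" "(x2, y2) \<in> grid_pool n j"
  shows "i = j"
proof -
  have n0: "n > 0" using n2 by simp
  have xy: "x1 = x2 \<Longrightarrow> int n dvd int y1 - int y2 \<Longrightarrow> False"
    using small_diff[of y1 n y2] g ne by auto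
  have diag_col: False if "Diag a b \<in> grid_index n L" "(x1, y1) \<in> grid_pool n (Diag a b)"
      "(x2, y2) \<in> grid_pool n (Diag a b)" "y1 = y2" for a b
  proof -
    have e1: "int n dvd (int a * int x1 + int b) - int y1"
      and e2: "int n dvd (int a * int x2 + int b) - int y2"
      using that mem_Diag[OF n0] modeq_dvd by blast+
    have "int n dvd ((int a * int x1 + int b) - int y1) - ((int a * int x2 + int b) - int y2)"
      using e1 e2 by (rule dvd_diff)
    moreover have "((int a * int x1 + int b) - int y1) - ((int a * int x2 + int b) - int y2)
        = (int a - int 0) * (int x1 - int x2)" using that(4) by (simp add: algebra_simps)
    ultimately have "int n dvd (int a - int 0) * (int x1 - int x2)" by simp
    moreover have "a \<noteq> 0" "a \<le> L - 2" using that(1) by (auto simp: mem_index)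
    ultimately have "int n dvd int x1 - int x2" using slope_cancel[OF n2 spd] by blast
    then have "x1 = x2" using small_diff g by blast
    then show False using ne that(4) by simp
  qed
  have line_diag: False if "(x1, y1) \<in> grid_pool n (Diag a b)"
      "(x2, y2) \<in> grid_pool n (Diag a b)" "x1 = x2" for a b
  proof -
    have "int y1 mod int n = int y2 mod int n" using that mem_Diag[OF n0] by auto
    then show False using xy that(3) modeq_dvd by blast
  qed
  have diag_diag: "Diag a b = Diag a' b'" if "Diag a b \<in> grid_index n L" "(x1, y1) \<in> grid_pool n (Diag a b)"
      "(x2, y2) \<in> grid_pool n (Diag a b)"
      "Diag a' b' \<in> grid_index n L" "(x1, y1) \<in> grid_pool n (Diag a' b')"
      "(x2, y2) \<in> grid_pool n (Diag a' b')" for a b a' b'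
  proof -
    have e1: "int n dvd (int a * int x1 + int b) - int y1"
      and e2: "int n dvd (int a * int x2 + int b) - int y2"
      and e3: "int n dvd (int a' * int x1 + int b') - int y1"
      and e4: "int n dvd (int a' * int x2 + int b') - int y2"
      using that mem_Diag[OF n0] modeq_dvd by blast+
    show ?thesis
    proof (cases "a = a'")
      case True
      have "int n dvd ((int a * int x1 + int b) - int y1) - ((int a' * int x1 + int b') - int y1)"
        using e1 e3 by (rule dvd_diff)
      then have "int n dvd int b - int b'" using True by simp
      moreover have "1 \<le> b" "b \<le> n" "1 \<le> b'" "b' \<le> n" using that by (auto simp: mem_index)
      ultimately have "b = b'" using small_diff by blast
      then show ?thesis using True by simp
    next
      case False
      have "int n dvd (((int a * int x1 + int b) - int y1) - ((int a * int x2 + int b) - int y2))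
          - (((int a' * int x1 + int b') - int y1) - ((int a' * int x2 + int b') - int y2))"
        using dvd_diff[OF dvd_diff[OF e1 e2] dvd_diff[OF e3 e4]] .
      moreover have "(((int a * int x1 + int b) - int y1) - ((int a * int x2 + int b) - int y2))
          - (((int a' * int x1 + int b') - int y1) - ((int a' * int x2 + int b') - int y2))
          = (int a - int a') * (int x1 - int x2)" by (simp add: algebra_simps)
      ultimately have "int n dvd (int a - int a') * (int x1 - int x2)" by simp
      moreover have "a \<le> L - 2" "a' \<le> L - 2" using that by (auto simp: mem_index)
      ultimately have "int n dvd int x1 - int x2" using slope_cancel[OF n2 spd] False by blast
      then have "x1 = x2" using small_diff g by blast
      then show ?thesis using line_diag that by blast
    qed
  qed
  show ?thesis
  proof (cases i)
    case (Line k)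
    then have ix: "x1 = k" "x2 = k" using i mem_Line by auto
    show ?thesis
    proof (cases j)
      case (Line k') then show ?thesis using j ix \<open>i = Line k\<close> mem_Line by auto
    next
      case (Col k') then show ?thesis using j ix ne mem_Col by auto
    next
      case (Diag a b) then show ?thesis using j ix line_diag by auto
    qed
  next
    case (Col k)
    then have iy: "y1 = k" "y2 = k" using i mem_Col by auto
    show ?thesis
    proof (cases j)
      case (Line k') then show ?thesis using j iy ne mem_Line by auto
    next
      case (Col k') then show ?thesis using j iy \<open>i = Col k\<close> mem_Col by auto
    next
      case (Diag a b) then show ?thesis using j iy diag_col by auto
    qed
  next
    case (Diag a b)
    show ?thesis
    proof (cases j)
      case (Line k') then show ?thesis using i Diag j line_diag mem_Line by auto
    next
      case (Col k') then show ?thesis using i Diag j diag_col mem_Col by auto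
    next
      case (Diag a' b') then show ?thesis using i \<open>i = Diag a b\<close> j diag_diag by blast
    qed
  qed
qed


lemma finite_index: "finite (grid_index n L)"
proof -
  have "grid_index n L = Line ` {1..n} \<union> Col ` {1..n} \<union> (\<lambda>(a, b). Diag a b) ` ({1..L-2} \<times> {1..n})"
    unfolding grid_index_def by auto
  then show ?thesis by simp
qed

theorem lemma1:
  fixes n L :: nat
  assumes "n \<ge> 2" and "2 \<le> L" and "L \<le> n + 1"
  shows "multipool (n^2) n L (grid n) (grid_index n L) (grid_pool n)
           \<longleftrightarrow> L - 2 < smallest_prime_divisor n"
proof
  assume mp: "multipool (n^2) n L (grid n) (grid_index n L) (grid_pool n)"
  have n0: "n > 0" using assms by simp
  show "L - 2 < smallest_prime_divisor n"
  proof (rule ccontr)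
    assume "\<not> L - 2 < smallest_prime_divisor n"
    then have pL: "smallest_prime_divisor n \<le> L - 2" by simp
    define p where "p = smallest_prime_divisor n"
    have pp: "prime p" "p dvd n" using spd_prime[OF assms(1)] p_def by auto
    then obtain d where nd: "n = p * d" by blast
    have p2: "p \<ge> 2" using pp prime_ge_2_nat by blast
    have d1: "d \<ge> 1" using nd n0 by (cases d) auto
    have "2 * d \<le> p * d" using mult_le_mono1[OF p2, of d] .
    then have dn: "1 + d \<le> n" using nd d1 by linarith
    define b where "b = rn n (1 - int p)"
    have b: "1 \<le> b" "b \<le> n" using rn_range[OF n0] b_def by auto
    have bm: "int b mod int n = (1 - int p) mod int n" using rn_mod[OF n0] b_def by simp
    have m1: "(int p * int 1 + int b) mod int n = int 1 mod int n"
    proof -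
      have "(int p * int 1 + int b) mod int n = (int p + (1 - int p)) mod int n"
        using bm by (metis mod_add_right_eq mult.right_neutral of_nat_1)
      then show ?thesis by simp
    qed
    have m2: "(int p * int (1 + d) + int b) mod int n = int 1 mod int n"
    proof -
      have eq: "int p * int (1 + d) + int b = (int p * int 1 + int b) + int n" using nd
        by (simp add: algebra_simps)
      show ?thesis unfolding eq mod_add_self2 by (rule m1)
    qed
    let ?S = "{i \<in> grid_index n L. (1, 1) \<in> grid_pool n i \<and> (1 + d, 1) \<in> grid_pool n i}"
    have c1: "Col 1 \<in> ?S" using dn n0 by (auto simp: mem_index mem_Col)
    have d1in: "(1, 1) \<in> grid_pool n (Diag p b)"
      using mem_Diag[OF n0, of 1 1 p b] m1 n0 by simp
    have d2in: "(1 + d, 1) \<in> grid_pool n (Diag p b)"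
      using mem_Diag[OF n0, of "1 + d" 1 p b] m2 n0 dn by simp
    have "p \<le> L - 2" using pL p_def by simp
    then have "Diag p b \<in> grid_index n L" using p2 b by (simp add: mem_index)
    then have c2: "Diag p b \<in> ?S" using d1in d2in by blast
    have fin: "finite ?S" using finite_index by simp
    have "{Col 1, Diag p b} \<subseteq> ?S" using c1 c2 by blast
    from card_mono[OF fin this] have ge: "2 \<le> card ?S" by simp
    have g1: "(1, 1) \<in> grid n" "(1 + d, 1) \<in> grid n" using dn d1 n0 by (auto simp: grid_def)
    have ne: "(1::nat, 1::nat) \<noteq> (1 + d, 1)" using d1 by simp
    have "\<forall>x\<in>grid n. \<forall>y\<in>grid n. x \<noteq> y \<longrightarrow>
        card {i\<in>grid_index n L. x \<in> grid_pool n i \<and> y \<in> grid_pool n i} \<le> 1"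
      using mp unfolding multipool_def by blast
    then have "card ?S \<le> 1" using g1 ne by blast
    then show False using ge by simp
  qed
next
  assume spd: "L - 2 < smallest_prime_divisor n"
  show "multipool (n^2) n L (grid n) (grid_index n L) (grid_pool n)"
    unfolding multipool_def
  proof (intro conjI ballI impI)
    show "finite (grid n)" by (simp add: grid_def)
    show "card (grid n) = n^2" by (simp add: grid_def power2_eq_square)
    show "finite (grid_index n L)" by (rule finite_index)
  next
    fix i assume "i \<in> grid_index n L"
    then show "grid_pool n i \<subseteq> grid n" "card (grid_pool n i) = n"
      using pool_props assms(1) by blast+
  next
    fix x assume x: "x \<in> grid n"
    obtain x1 y1 where xe: "x = (x1, y1)" by (cases x)
    have "1 \<le> x1" "x1 \<le> n" "1 \<le> y1" "y1 \<le> n" using x xe by (auto simp: grid_def)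
    from count_L[OF assms(1,2) this] show "card {i \<in> grid_index n L. x \<in> grid_pool n i} = L"
      using xe by simp
  next
    fix u v assume uv: "u \<in> grid n" "v \<in> grid n" "u \<noteq> v"
    obtain x1 y1 where u: "u = (x1, y1)" by (cases u)
    obtain x2 y2 where v: "v = (x2, y2)" by (cases v)
    have g: "1 \<le> x1" "x1 \<le> n" "1 \<le> y1" "y1 \<le> n" "1 \<le> x2" "x2 \<le> n" "1 \<le> y2" "y2 \<le> n"
      using uv u v by (auto simp: grid_def)
    have fin: "finite {i \<in> grid_index n L. u \<in> grid_pool n i \<and> v \<in> grid_pool n i}"
      using finite_index by simp
    have all: "\<forall>i\<in>{i \<in> grid_index n L. u \<in> grid_pool n i \<and> v \<in> grid_pool n i}.
        \<forall>j\<in>{i \<in> grid_index n L. u \<in> grid_pool n i \<and> v \<in> grid_pool n i}. i = j"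
    proof (intro ballI)
      fix i j
      assume i: "i \<in> {i \<in> grid_index n L. u \<in> grid_pool n i \<and> v \<in> grid_pool n i}"
        and j: "j \<in> {i \<in> grid_index n L. u \<in> grid_pool n i \<and> v \<in> grid_pool n i}"
      have ne: "(x1, y1) \<noteq> (x2, y2)" using uv u v by simp
      have "i \<in> grid_index n L" "(x1, y1) \<in> grid_pool n i" "(x2, y2) \<in> grid_pool n i"
        using i u v by auto
      moreover have "j \<in> grid_index n L" "(x1, y1) \<in> grid_pool n j" "(x2, y2) \<in> grid_pool n j"
        using j u v by auto
      ultimately show "i = j" using pair_unique[OF assms(1) spd g ne] by blast
    qed
    show "card {i \<in> grid_index n L. u \<in> grid_pool n i \<and> v \<in> grid_pool n i} \<le> 1"
      using card_le_Suc0_iff_eq[OF fin] all by simp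
  qed
qed

end
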